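(* Let $\mathcal{C}\subseteq\mathbb{F}_q^n$ be a code with $(r,\delta)$-locality. Let $\mathcal{S}\subseteq[n]$ and let $\Delta$ be a positive integer with $\Delta\le|\mathcal{S}|$. Then there exist subsets $\mathcal{A},\mathcal{T}\subseteq[n]$ such that $$\mathcal{A}\subseteq\mathcal{S}\cap\mathcal{T},\qquad |\mathcal{A}|=(\delta-1)\left\lfloor\frac{\Delta}{r+\delta-1}\right\rfloor,\qquad |\mathcal{S}\cap\mathcal{T}|\le\Delta,$$ and $\mathcal{C}|_{\mathcal{T}}$ is generated by $\mathcal{C}|_{\mathcal{T}\setminus\mathcal{A}}$, i.e., there is a map $\psi$ with $c|_{\mathcal{T}}=\psi(c|_{\mathcal{T}\setminus\mathcal{A}})$ for every $c\in\mathcal{C}$.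
   Context: $[n]=\{1,\dots,n\}$; for $\mathcal{X}\subseteq[n]$, $c|_{\mathcal{X}}$ is the restriction of $c$ to coordinates in $\mathcal{X}$ and $\mathcal{C}|_{\mathcal{X}}=\{c|_{\mathcal{X}}:c\in\mathcal{C}\}$. A code $\mathcal{C}\subseteq\mathbb{F}_q^n$ has $(r,\delta)$-locality (with $r\ge1$, $\delta\ge 2$) if every coordinate $i\in[n]$ lies in a subset $J_i\subseteq[n]$ with $|J_i|\le r+\delta-1$ such that $\mathcal{C}|_{J_i}$ has minimum distance at least $\delta$. *)

theory Defs
  imports "HOL-Library.FuncSet"
begin

text \<open>Words of length n over the alphabet 'a are functions nat => 'a that are
extensional on the coordinate set [n] = {1..n}. A code is a set of such words.
The restriction c|_X is restrict c X.\<close>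

definition is_code :: "nat \<Rightarrow> (nat \<Rightarrow> 'a) set \<Rightarrow> bool" where
  "is_code n C \<longleftrightarrow> C \<subseteq> ({1..n} \<rightarrow>\<^sub>E (UNIV :: 'a set))"

definition restr_code :: "(nat \<Rightarrow> 'a) set \<Rightarrow> nat set \<Rightarrow> (nat \<Rightarrow> 'a) set" where
  "restr_code C X = (\<lambda>c. restrict c X) ` C"

definition hdist_on :: "nat set \<Rightarrow> (nat \<Rightarrow> 'a) \<Rightarrow> (nat \<Rightarrow> 'a) \<Rightarrow> nat" where
  "hdist_on X x y = card {i \<in> X. x i \<noteq> y i}"

definition min_dist_ge :: "nat set \<Rightarrow> (nat \<Rightarrow> 'a) set \<Rightarrow> nat \<Rightarrow> bool" where
  "min_dist_ge X D d \<longleftrightarrow> (\<forall>x\<in>D. \<forall>y\<in>D. x \<noteq> y \<longrightarrow> d \<le> hdist_on X x y)"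

definition has_locality :: "nat \<Rightarrow> (nat \<Rightarrow> 'a) set \<Rightarrow> nat \<Rightarrow> nat \<Rightarrow> bool" where
  "has_locality n C r \<delta> \<longleftrightarrow>
     (\<forall>i\<in>{1..n}. \<exists>J. J \<subseteq> {1..n} \<and> i \<in> J \<and> card J \<le> r + \<delta> - 1 \<and>
        min_dist_ge J (restr_code C J) \<delta>)"

end

theory Submission
  imports Defs
begin

theorem mainTheorem2:
  fixes C :: "(nat \<Rightarrow> 'a::{field,finite}) set"
    and n r \<delta> \<Delta> :: nat and S :: "nat set"
  assumes "is_code n C"
    and "r \<ge> 1" and "\<delta> \<ge> 2"
    and "has_locality n C r \<delta>"
    and "S \<subseteq> {1..n}"
    and "\<Delta> > 0" and "\<Delta> \<le> card S"
  shows "\<exists>A T. A \<subseteq> {1..n} \<and> T \<subseteq> {1..n} \<and> A \<subseteq> S \<inter> T \<and>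
           card A = (\<delta> - 1) * (\<Delta> div (r + \<delta> - 1)) \<and>
           card (S \<inter> T) \<le> \<Delta> \<and>
           (\<exists>\<psi>. \<forall>c\<in>C. restrict c T = \<psi> (restrict c (T - A)))"
proof -
  define d where "d = \<delta> - 1"
  define k where "k = \<Delta> div (r + \<delta> - 1)"
  define K where "K = d * k"
  have d0: "d > 0" using assms(3) d_def by simp
  have kR: "k * (r + d) \<le> \<Delta>"
  proof -
    have "r + d = r + \<delta> - 1" using assms(3) d_def by simp
    then show ?thesis unfolding k_def by (simp add: div_times_less_eq_dividend)
  qed
  define inv where "inv A T \<longleftrightarrow> A \<subseteq> S \<inter> T \<and> T \<subseteq> {1..n} \<and>
     card (S \<inter> T) \<le> card A + r * (card A div d) \<and> card A \<le> K \<and>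
     (\<forall>c\<in>C. \<forall>c'\<in>C. (\<forall>i\<in>T-A. c i = c' i) \<longrightarrow> (\<forall>i\<in>T. c i = c' i))" for A T
  have finS: "finite S" using assms(5) finite_subset by blast
  have step: "\<exists>A' T'. inv A' T' \<and> card A' > card A" if iv: "inv A T" and lt: "card A < K" for A T
  proof -
    have AS: "A \<subseteq> S \<inter> T" and Tn: "T \<subseteq> {1..n}"
      and cnt: "card (S \<inter> T) \<le> card A + r * (card A div d)"
      and det: "\<forall>c\<in>C. \<forall>c'\<in>C. (\<forall>i\<in>T-A. c i = c' i) \<longrightarrow> (\<forall>i\<in>T. c i = c' i)"
      using iv unfolding inv_def by auto
    have finT: "finite T" using Tn finite_subset by blast
    have finA: "finite A" using AS finT finite_subset by blast
    have "card A div d < k" using lt unfolding K_def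
      by (metis less_mult_imp_div_less mult.commute)
    then have "r * (card A div d) \<le> r * k" by simp
    then have "card (S \<inter> T) < K + r * k" using cnt lt by linarith
    also have "K + r * k = k * (r + d)" unfolding K_def by (simp add: algebra_simps)
    also have "\<dots> \<le> card S" using kR assms(7) by linarith
    finally have "card (S \<inter> T) < card S" .
    then have "S \<inter> T \<noteq> S" by auto
    then obtain x where xS: "x \<in> S" and xT: "x \<notin> T" by blast
    then have "x \<in> {1..n}" using assms(5) by blast
    then obtain J where Jn: "J \<subseteq> {1..n}" and xJ: "x \<in> J" and cJ: "card J \<le> r + \<delta> - 1"
      and md: "min_dist_ge J (restr_code C J) \<delta>"
      using assms(4) unfolding has_locality_def by blast
    have finJ: "finite J" using Jn finite_subset by blast
    define U where "U = S \<inter> J - T"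
    define s where "s = card U"
    have finU: "finite U" unfolding U_def using finJ by blast
    have "x \<in> U" unfolding U_def using xS xJ xT by blast
    then have s1: "s \<ge> 1" unfolding s_def using finU
      by (metis One_nat_def Suc_leI card_gt_0_iff empty_iff)
    have sJ: "s \<le> card J" unfolding s_def U_def using finJ by (intro card_mono) auto
    define m where "m = K - card A"
    define a where "a = min m (min d s)"
    have a1: "a \<ge> 1" unfolding a_def m_def using lt d0 s1 by simp
    have "a \<le> card U" unfolding a_def s_def by simp
    then obtain Ai where AiU: "Ai \<subseteq> U" and cAi: "card Ai = a"
      by (rule obtain_subset_with_card_n)
    define p where "p = min (d - a) (s - a)"
    have finUA: "finite (U - Ai)" using finU by blast
    have "card (U - Ai) = s - a" using AiU cAi finU unfolding s_def by (simp add: card_Diff_subset finite_subset)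
    then have "p \<le> card (U - Ai)" unfolding p_def by simp
    then obtain P where PU: "P \<subseteq> U - Ai" and cP: "card P = p"
      by (rule obtain_subset_with_card_n)
    define A' where "A' = A \<union> Ai"
    define T' where "T' = T \<union> (J - P)"
    have finAi: "finite Ai" using AiU finU finite_subset by blast
    have finP: "finite P" using PU finUA finite_subset by blast
    have AiT: "Ai \<inter> T = {}" using AiU unfolding U_def by blast
    have cA': "card A' = card A + a" unfolding A'_def using AiT AS finA finAi cAi
      by (subst card_Un_disjoint) auto
    have ST': "S \<inter> T' = (S \<inter> T) \<union> (U - P)" unfolding T'_def U_def using PU U_def by blast
    have cUP: "card (U - P) = s - p" unfolding s_def using PU finP
      by (subst card_Diff_subset) (auto simp: cP)
    have cST': "card (S \<inter> T') = card (S \<inter> T) + (s - p)" unfolding ST'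
      using finT finU cUP by (subst card_Un_disjoint) (auto simp: U_def)
    have cnt': "card (S \<inter> T') \<le> card A' + r * (card A' div d)"
    proof (cases "s \<le> d")
      case True
      then have "s - p = a" unfolding p_def a_def by auto
      moreover have "card A div d \<le> card A' div d" using cA' by (simp add: div_le_mono)
      moreover have "r * (card A div d) \<le> r * (card A' div d)" using calculation(2) by simp
      ultimately show ?thesis using cST' cnt cA' by linarith
    next
      case False
      then have "a = min m d" unfolding a_def by simp
      have "p = d - a" unfolding p_def using False \<open>a = min m d\<close> by auto
      then have sp: "s - p \<le> r + a" using sJ cJ False unfolding d_def by linarith
      have inc: "card A' div d \<ge> card A div d + 1"
      proof (cases "a = d")
        case True
        have "(card A + d) div d = card A div d + 1" using d0 by (simp add: div_add_self2)
        then show ?thesis using cA' True by simp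
      next
        case False
        then have "a = m" using \<open>a = min m d\<close> by linarith
        then have "card A' = d * k" using cA' lt unfolding m_def K_def by simp
        then have "card A' div d = k" using d0 by simp
        moreover have "card A div d < k" using lt unfolding K_def
          by (metis less_mult_imp_div_less mult.commute)
        ultimately show ?thesis by simp
      qed
      then have "r * (card A' div d) \<ge> r * (card A div d) + r"
        by (metis add.commute distrib_left mult.right_neutral mult_le_mono2)
      then show ?thesis using cST' cnt cA' sp by linarith
    qed
    have aleK: "card A' \<le> K" using cA' unfolding a_def m_def using lt by simp
    have det': "\<forall>c\<in>C. \<forall>c'\<in>C. (\<forall>i\<in>T'-A'. c i = c' i) \<longrightarrow> (\<forall>i\<in>T'. c i = c' i)"
    proof (intro ballI impI)
      fix c c' i assume cC: "c \<in> C" and c'C: "c' \<in> C" and ag: "\<forall>i\<in>T'-A'. c i = c' i"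
        and iT': "i \<in> T'"
      have agT: "\<forall>i\<in>T. c i = c' i"
        using det cC c'C ag AiT unfolding T'_def A'_def by blast
      have Dsub: "{j \<in> J. restrict c J j \<noteq> restrict c' J j} \<subseteq> P \<union> Ai"
      proof
        fix j assume "j \<in> {j \<in> J. restrict c J j \<noteq> restrict c' J j}"
        then have jJ: "j \<in> J" and ne: "c j \<noteq> c' j" by auto
        show "j \<in> P \<union> Ai"
        proof (rule ccontr)
          assume "j \<notin> P \<union> Ai"
          then have "j \<in> T'" "j \<notin> Ai" using jJ unfolding T'_def by auto
          then show False using ag agT ne AS unfolding A'_def by blast
        qed
      qed
      have "card (P \<union> Ai) \<le> p + a" using card_Un_le[of P Ai] cP cAi by simp
      also have "p + a \<le> d" unfolding p_def a_def by simp
      finally have c1: "card (P \<union> Ai) \<le> d" .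
      have "card {j \<in> J. restrict c J j \<noteq> restrict c' J j} \<le> card (P \<union> Ai)"
        using Dsub finP finAi by (intro card_mono) auto
      then have "hdist_on J (restrict c J) (restrict c' J) < \<delta>"
        unfolding hdist_on_def using c1 d_def assms(3) by linarith
      moreover have "restrict c J \<in> restr_code C J" "restrict c' J \<in> restr_code C J"
        unfolding restr_code_def using cC c'C by auto
      ultimately have "restrict c J = restrict c' J" using md unfolding min_dist_ge_def
        by (meson leD)
      then have agJ: "\<forall>j\<in>J. c j = c' j" by (metis restrict_apply')
      show "c i = c' i" using iT' agT agJ unfolding T'_def by blast
    qed
    have sub1: "A' \<subseteq> S \<inter> T'"
    proof -
      have "Ai \<subseteq> S \<inter> (J - P)" using AiU PU unfolding U_def by blast
      then show ?thesis using AS unfolding A'_def T'_def by blast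
    qed
    have sub2: "T' \<subseteq> {1..n}" using Tn Jn unfolding T'_def by blast
    have "inv A' T'" unfolding inv_def using sub1 sub2 cnt' aleK det' by (intro conjI)
    moreover have "card A' > card A" using cA' a1 by simp
    ultimately show ?thesis by blast
  qed
  have final: "\<forall>A T. K - card A = N \<longrightarrow> inv A T \<longrightarrow> (\<exists>A' T'. inv A' T' \<and> card A' = K)" for N
  proof (induction N rule: less_induct)
    case (less N)
    show ?case
    proof (intro allI impI)
      fix A T assume N: "K - card A = N" and iv: "inv A T"
      show "\<exists>A' T'. inv A' T' \<and> card A' = K"
      proof (cases "card A < K")
        case True
        then obtain A' T' where iv': "inv A' T'" and gt: "card A' > card A" using step iv by blast
        have "card A' \<le> K" using iv' unfolding inv_def by blast
        then have "K - card A' < N" using N gt True by linarith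
        then have "\<forall>A T. K - card A = K - card A' \<longrightarrow> inv A T \<longrightarrow> (\<exists>A' T'. inv A' T' \<and> card A' = K)"
          by (rule less.IH)
        then show ?thesis using iv' by blast
      next
        case False
        have "card A \<le> K" using iv unfolding inv_def by blast
        then have "card A = K" using False by linarith
        then show ?thesis using iv by blast
      qed
    qed
  qed
  have "inv {} {}" unfolding inv_def by auto
  then obtain A T where iv: "inv A T" and cA: "card A = K" using final by blast
  have AS: "A \<subseteq> S \<inter> T" and Tn: "T \<subseteq> {1..n}"
    and cnt: "card (S \<inter> T) \<le> card A + r * (card A div d)"
    and det: "\<forall>c\<in>C. \<forall>c'\<in>C. (\<forall>i\<in>T-A. c i = c' i) \<longrightarrow> (\<forall>i\<in>T. c i = c' i)"
    using iv unfolding inv_def by auto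
  have "card A div d = k" using cA d0 unfolding K_def by simp
  then have "card (S \<inter> T) \<le> k * (r + d)" using cnt cA unfolding K_def by (simp add: algebra_simps)
  then have cST: "card (S \<inter> T) \<le> \<Delta>" using kR by linarith
  define \<psi> where "\<psi> y = restrict (SOME c. c \<in> C \<and> restrict c (T - A) = y) T" for y
  have "\<forall>c\<in>C. restrict c T = \<psi> (restrict c (T - A))"
  proof
    fix c assume cC: "c \<in> C"
    have "\<exists>c'. c' \<in> C \<and> restrict c' (T - A) = restrict c (T - A)" using cC by blast
    then have ex: "(SOME c'. c' \<in> C \<and> restrict c' (T - A) = restrict c (T - A)) \<in> C \<and>
       restrict (SOME c'. c' \<in> C \<and> restrict c' (T - A) = restrict c (T - A)) (T - A) = restrict c (T - A)"
      by (rule someI_ex)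
    define c' where "c' = (SOME c'. c' \<in> C \<and> restrict c' (T - A) = restrict c (T - A))"
    have c'C: "c' \<in> C" and eq: "restrict c' (T - A) = restrict c (T - A)" using ex c'_def by auto
    have "\<forall>i\<in>T-A. c i = c' i" using eq by (metis restrict_apply')
    then have "\<forall>i\<in>T. c i = c' i" using det cC c'C by blast
    then have "restrict c T = restrict c' T" by (intro restrict_ext) auto
    then show "restrict c T = \<psi> (restrict c (T - A))" unfolding \<psi>_def c'_def by simp
  qed
  moreover have "A \<subseteq> {1..n}" using AS Tn by blast
  moreover have "card A = (\<delta> - 1) * (\<Delta> div (r + \<delta> - 1))" using cA unfolding K_def k_def d_def .
  ultimately show ?thesis using AS Tn cST by blast
qed

end
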